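(* Let $K$ be a compact Hausdorff space, $X$ a Banach space, and $t_0$ an accumulation point of $K$. If $f\in C(K,X)$ satisfies $\|f\|_\infty=1$ and $\|f(t_0)\|=1$, then $f$ is a ccs Daugavet point of $C(K,X)$. Consequently, for scalar-valued $C(K)$, the notions of $\Delta$-point, Daugavet point, super $\Delta$-point, super Daugavet point, ccs $\Delta$-point and ccs Daugavet point all coincide.
   Context: $C(K,X)$ is the space of continuous $X$-valued functions on $K$ with the supremum norm. For a Banach space $Z$ and $z\in S_Z$: slices of $B_Z$ are non-empty sets $\{w\in B_Z:\operatorname{Re}z^*(w)>\|z^*\|-\delta\}$ ($z^*\in Z^*$, $\delta>0$); a ccs is $\sum_{i=1}^n\lambda_iS_i$ with $\lambda_i\in(0,1]$, $\sum\lambda_i=1$, $S_i$ slices. $z$ is a $\Delta$-point (resp. super $\Delta$-point, ccs $\Delta$-point) if $\sup_{w\in A}\|z-w\|=2$ for every slice (resp. relatively weakly open subset, ccs) $A$ of $B_Z$ containing $z$; $z$ is a Daugavet point (resp. super Daugavet point, ccs Daugavet point) if $\sup_{w\in A}\|z-w\|=2$ for every slice (resp. non-empty relatively weakly open subset, ccs) $A$ of $B_Z$. *)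

theory Defs
  imports "HOL-Analysis.Analysis"
begin

text \<open>Dual elements z* are continuous (real-)linear functionals, i.e. elements of the type of bounded linear maps into real;
  for complex spaces, Re z* ranges exactly over the real continuous functionals, with the same norm.\<close>

definition slice :: "'z::real_normed_vector set \<Rightarrow> bool" where
  "slice S \<longleftrightarrow> S \<noteq> {} \<and>
     (\<exists>(zs :: 'z \<Rightarrow>\<^sub>L real) \<delta>. \<delta> > 0 \<and>
        S = {w \<in> cball 0 1. blinfun_apply zs w > norm zs - \<delta>})"

definition ccs :: "'z::real_normed_vector set \<Rightarrow> bool" where
  "ccs A \<longleftrightarrow> (\<exists>(n::nat) (lam::nat \<Rightarrow> real) (S::nat \<Rightarrow> 'z set).
     n \<ge> 1 \<and> (\<forall>i<n. 0 < lam i \<and> lam i \<le> 1 \<and> slice (S i)) \<and>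
     (\<Sum>i<n. lam i) = 1 \<and>
     A = {(\<Sum>i<n. lam i *\<^sub>R x i) | x. \<forall>i<n. x i \<in> S i})"

definition weakly_open :: "'z::real_normed_vector set \<Rightarrow> bool" where
  "weakly_open U \<longleftrightarrow> (\<forall>x\<in>U. \<exists>(F :: ('z \<Rightarrow>\<^sub>L real) set) \<epsilon>. finite F \<and> \<epsilon> > 0 \<and>
      {y. \<forall>zs\<in>F. \<bar>blinfun_apply zs y - blinfun_apply zs x\<bar> < \<epsilon>} \<subseteq> U)"

definition rel_weakly_open_ball :: "'z::real_normed_vector set \<Rightarrow> bool" where
  "rel_weakly_open_ball A \<longleftrightarrow> (\<exists>U. weakly_open U \<and> A = U \<inter> cball 0 1)"

definition delta_point :: "'z::real_normed_vector \<Rightarrow> bool" where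
  "delta_point z \<longleftrightarrow> norm z = 1 \<and>
     (\<forall>A. slice A \<and> z \<in> A \<longrightarrow> (SUP w\<in>A. norm (z - w)) = 2)"

definition super_delta_point :: "'z::real_normed_vector \<Rightarrow> bool" where
  "super_delta_point z \<longleftrightarrow> norm z = 1 \<and>
     (\<forall>A. rel_weakly_open_ball A \<and> z \<in> A \<longrightarrow> (SUP w\<in>A. norm (z - w)) = 2)"

definition ccs_delta_point :: "'z::real_normed_vector \<Rightarrow> bool" where
  "ccs_delta_point z \<longleftrightarrow> norm z = 1 \<and>
     (\<forall>A. ccs A \<and> z \<in> A \<longrightarrow> (SUP w\<in>A. norm (z - w)) = 2)"

definition daugavet_point :: "'z::real_normed_vector \<Rightarrow> bool" where
  "daugavet_point z \<longleftrightarrow> norm z = 1 \<and>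
     (\<forall>A. slice A \<longrightarrow> (SUP w\<in>A. norm (z - w)) = 2)"

definition super_daugavet_point :: "'z::real_normed_vector \<Rightarrow> bool" where
  "super_daugavet_point z \<longleftrightarrow> norm z = 1 \<and>
     (\<forall>A. rel_weakly_open_ball A \<and> A \<noteq> {} \<longrightarrow> (SUP w\<in>A. norm (z - w)) = 2)"

definition ccs_daugavet_point :: "'z::real_normed_vector \<Rightarrow> bool" where
  "ccs_daugavet_point z \<longleftrightarrow> norm z = 1 \<and>
     (\<forall>A. ccs A \<longrightarrow> (SUP w\<in>A. norm (z - w)) = 2)"

definition six_notions_agree :: "'z::real_normed_vector \<Rightarrow> bool" where
  "six_notions_agree z \<longleftrightarrow>
     (daugavet_point z \<longleftrightarrow> delta_point z) \<and>
     (super_delta_point z \<longleftrightarrow> delta_point z) \<and>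
     (super_daugavet_point z \<longleftrightarrow> delta_point z) \<and>
     (ccs_delta_point z \<longleftrightarrow> delta_point z) \<and>
     (ccs_daugavet_point z \<longleftrightarrow> delta_point z)"

end

theory Submission
  imports Defs
begin
lemma bump:
  fixes s :: "'k::t2_space"
  assumes "compact (UNIV::'k set)" "open U" "s \<in> U"
  obtains h where "continuous_on UNIV h" "h s = 1" "\<And>t. t \<notin> U \<Longrightarrow> h t = 0"
    "\<And>t. 0 \<le> h t \<and> h t \<le> (1::real)"
proof -
  have ns: "normal_space (euclidean :: 'k topology)"
    apply (rule compact_Hausdorff_or_regular_imp_normal_space)
    using assms(1) apply (auto simp: compact_space_def Hausdorff_space_def disjnt_def)
    by (metis hausdorff)
  obtain f where f: "continuous_map euclidean euclideanreal f" "f ` {s} \<subseteq> {1}" "f ` (-U) \<subseteq> {0}"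
    apply (rule Urysohn_lemma_alt[OF ns, of "{s}" "-U" 1 0])
    using assms by (auto simp: closed_open disjnt_def)
  define h where "h t = max 0 (min 1 (f t))" for t
  have "continuous_on UNIV h" unfolding h_def using f(1)
    by (auto intro!: continuous_intros simp: continuous_map_iff_continuous)
  then show ?thesis apply (rule that) using f by (auto simp: h_def)
qed
lemma step_exists:
  fixes t0 :: "'k::t2_space"
  assumes "compact (UNIV::'k set)" "t0 islimpt (UNIV::'k set)" "open W" "t0 \<in> W"
  shows "\<exists>s h W'. s \<in> W \<and> continuous_on UNIV h \<and> (\<forall>t. 0 \<le> h t \<and> h t \<le> (1::real)) \<and> h s = 1
     \<and> open W' \<and> t0 \<in> W' \<and> W' \<subseteq> W \<and> (\<forall>t. h t \<noteq> 0 \<longrightarrow> t \<in> W \<and> t \<notin> W')"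
proof -
  obtain s where s: "s \<in> W" "s \<noteq> t0" by (rule islimptE[OF assms(2) assms(4) assms(3)]) auto
  obtain A B where AB: "open A" "open B" "s \<in> A" "t0 \<in> B" "A \<inter> B = {}"
    using hausdorff[OF s(2)] by blast
  obtain h where h: "continuous_on UNIV h" "h s = 1" "\<And>t. t \<notin> A \<inter> W \<Longrightarrow> h t = 0"
    "\<And>t. 0 \<le> h t \<and> h t \<le> (1::real)"
    using bump[OF assms(1), of "A \<inter> W" s] AB(1,3) assms(3) s(1) by blast
  have hz: "\<forall>t. h t \<noteq> 0 \<longrightarrow> t \<in> W \<and> t \<notin> B \<inter> W" using h(3) AB by blast
  show ?thesis
    apply (rule exI[of _ s], rule exI[of _ h], rule exI[of _ "B \<inter> W"])
    using h(1,2,4) AB(2,4) assms(3,4) s(1) hz by auto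
qed

lemma disjoint_bumps:
  fixes t0 :: "'k::t2_space"
  assumes "compact (UNIV::'k set)" "t0 islimpt (UNIV::'k set)" "open V" "t0 \<in> V"
  obtains s :: "nat \<Rightarrow> 'k" and h :: "nat \<Rightarrow> 'k \<Rightarrow> real"
  where "\<And>m. s m \<in> V" "\<And>m. continuous_on UNIV (h m)" "\<And>m t. 0 \<le> h m t \<and> h m t \<le> 1"
    "\<And>m. h m (s m) = 1" "\<And>m m' t. m \<noteq> m' \<Longrightarrow> h m t = 0 \<or> h m' t = 0"
proof -
  define Q where "Q W s h W' \<longleftrightarrow> s \<in> W \<and> continuous_on UNIV h \<and> (\<forall>t. 0 \<le> h t \<and> h t \<le> (1::real)) \<and> h s = 1
     \<and> open W' \<and> t0 \<in> W' \<and> W' \<subseteq> W \<and> (\<forall>t. h t \<noteq> 0 \<longrightarrow> t \<in> W \<and> t \<notin> W')" for W s h W'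
  have ex: "\<exists>x. open W \<and> t0 \<in> W \<longrightarrow> Q W (fst x) (fst (snd x)) (snd (snd x))" for W
  proof (cases "open W \<and> t0 \<in> W")
    case True
    have "\<exists>s h W'. Q W s h W'" unfolding Q_def
      using step_exists[OF assms(1,2), of W] True by simp
    then obtain s h W' where "Q W s h W'" by blast
    then show ?thesis by (intro exI[of _ "(s,h,W')"]) simp
  qed blast
  from choice[OF allI[OF ex]] obtain F where F0: "\<forall>W. open W \<and> t0 \<in> W \<longrightarrow> Q W (fst (F W)) (fst (snd (F W))) (snd (snd (F W)))"
    by (rule exE)
  have F: "open W \<and> t0 \<in> W \<longrightarrow> Q W (fst (F W)) (fst (snd (F W))) (snd (snd (F W)))" for W
    using F0 by (rule spec)
  define Wn where "Wn n = ((\<lambda>W. snd (snd (F W))) ^^ n) V" for n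
  have Wsuc: "Wn (Suc n) = snd (snd (F (Wn n)))" for n by (simp add: Wn_def)
  have inv: "open (Wn n) \<and> t0 \<in> Wn n" for n
  proof (induction n)
    case 0 then show ?case using assms by (simp add: Wn_def)
  next
    case (Suc n) then show ?case using F[of "Wn n"] unfolding Wsuc Q_def by simp
  qed
  define s where "s n = fst (F (Wn n))" for n
  define h where "h n = fst (snd (F (Wn n)))" for n
  have P2: "Q (Wn n) (s n) (h n) (Wn (Suc n))" for n
    using F[of "Wn n"] inv[of n] unfolding s_def h_def Wsuc by simp
  have dec: "decseq Wn" by (rule decseq_SucI) (use P2 in \<open>simp add: Q_def\<close>)
  have sub: "n \<le> m \<Longrightarrow> Wn m \<subseteq> Wn n" for n m using dec by (simp add: decseq_def)
  have disj: "h m t = 0 \<or> h m' t = 0" if "m < m'" for m m' t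
  proof -
    have "h m' t \<noteq> 0 \<Longrightarrow> t \<in> Wn (Suc m)" using P2[of m'] sub[of "Suc m" m'] that unfolding Q_def by auto
    moreover have "h m t \<noteq> 0 \<Longrightarrow> t \<notin> Wn (Suc m)" using P2[of m] unfolding Q_def by auto
    ultimately show ?thesis by blast
  qed
  show ?thesis
  proof (rule that)
    show "s m \<in> V" for m using P2[of m] sub[of 0 m] by (auto simp: Wn_def Q_def)
    show "continuous_on UNIV (h m)" for m using P2[of m] by (simp add: Q_def)
    show "0 \<le> h m t \<and> h m t \<le> 1" for m t using P2[of m] by (simp add: Q_def)
    show "h m (s m) = 1" for m using P2[of m] by (simp add: Q_def)
    show "h m t = 0 \<or> h m' t = 0" if "m \<noteq> m'" for m m' t
      using disj[of m m' t] disj[of m' m t] that by (metis linorder_neqE_nat)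
  qed
qed

lemma apply_bcontfun_sum:
  "apply_bcontfun (\<Sum>i\<in>A. f i) t = (\<Sum>i\<in>A. apply_bcontfun (f i) t)"
  by (induction A rule: infinite_finite_induct) auto

lemma disjoint_weak_null:
  fixes p :: "nat \<Rightarrow> ('a::topological_space \<Rightarrow>\<^sub>C 'b::real_normed_vector)"
    and \<phi> :: "('a \<Rightarrow>\<^sub>C 'b) \<Rightarrow>\<^sub>L real"
  assumes pB: "\<And>n. norm (p n) \<le> B"
    and pd: "\<And>m m' t. m \<noteq> m' \<Longrightarrow> apply_bcontfun (p m) t = 0 \<or> apply_bcontfun (p m') t = 0"
  shows "(\<lambda>n. blinfun_apply \<phi> (p n)) \<longlonglongrightarrow> 0"
proof -
  define a where "a n = \<bar>blinfun_apply \<phi> (p n)\<bar>" for n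
  have B0: "0 \<le> B" using pB[of 0] norm_ge_zero[of "p 0"] by linarith
  have bound: "(\<Sum>n<N. a n) \<le> norm \<phi> * B" for N
  proof -
    define c where "c n = sgn (blinfun_apply \<phi> (p n))" for n
    define q where "q = (\<Sum>n<N. c n *\<^sub>R p n)"
    have c1: "\<bar>c n\<bar> \<le> 1" for n by (simp add: c_def abs_sgn_eq)
    have "blinfun_apply \<phi> q = (\<Sum>n<N. c n * blinfun_apply \<phi> (p n))"
      unfolding q_def by (simp add: blinfun.sum_right blinfun.scaleR_right)
    also have "\<dots> = (\<Sum>n<N. a n)"
      by (rule sum.cong) (auto simp: a_def c_def sgn_real_def)
    finally have eq: "blinfun_apply \<phi> q = (\<Sum>n<N. a n)" .
    have qt: "norm (apply_bcontfun q t) \<le> B" for t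
    proof (cases "\<exists>n0<N. apply_bcontfun (p n0) t \<noteq> 0")
      case True
      then obtain n0 where n0: "n0 < N" "apply_bcontfun (p n0) t \<noteq> 0" by blast
      have "apply_bcontfun q t = (\<Sum>n<N. c n *\<^sub>R apply_bcontfun (p n) t)"
        unfolding q_def by (simp add: apply_bcontfun_sum)
      also have "\<dots> = c n0 *\<^sub>R apply_bcontfun (p n0) t + (\<Sum>n\<in>{..<N}-{n0}. c n *\<^sub>R apply_bcontfun (p n) t)"
        by (rule sum.remove) (use n0 in auto)
      also have "(\<Sum>n\<in>{..<N}-{n0}. c n *\<^sub>R apply_bcontfun (p n) t) = 0"
      proof (rule sum.neutral, rule ballI)
        fix n assume "n \<in> {..<N}-{n0}"
        then have "apply_bcontfun (p n) t = 0" using pd[of n n0 t] n0(2) by auto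
        then show "c n *\<^sub>R apply_bcontfun (p n) t = 0" by simp
      qed
      finally have "apply_bcontfun q t = c n0 *\<^sub>R apply_bcontfun (p n0) t" by simp
      then have "norm (apply_bcontfun q t) = \<bar>c n0\<bar> * norm (apply_bcontfun (p n0) t)" by simp
      also have "\<dots> \<le> 1 * B"
        by (rule mult_mono[OF c1 order.trans[OF norm_bounded pB]]) auto
      finally show ?thesis by simp
    next
      case False
      then have "apply_bcontfun q t = 0" unfolding q_def by (simp add: apply_bcontfun_sum)
      then show ?thesis using B0 by simp
    qed
    have "(\<Sum>n<N. a n) \<le> \<bar>blinfun_apply \<phi> q\<bar>" using eq by simp
    also have "\<dots> \<le> norm \<phi> * norm q" using norm_blinfun[of \<phi> q] by simp
    also have "\<dots> \<le> norm \<phi> * B" by (rule mult_left_mono[OF norm_bound[OF qt]]) simp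
    finally show ?thesis .
  qed
  have "summable a" by (rule summableI_nonneg_bounded[OF _ bound]) (simp add: a_def)
  then have "a \<longlonglongrightarrow> 0" by (rule summable_LIMSEQ_zero)
  then show ?thesis unfolding a_def by (rule tendsto_rabs_zero_cancel)
qed

lemma approx_seq:
  fixes g0 :: "'k::topological_space \<Rightarrow>\<^sub>C 'x::real_normed_vector" and y :: 'x
  assumes hc: "\<And>m. continuous_on UNIV (h m)" and h01: "\<And>m t. 0 \<le> h m t \<and> h m t \<le> (1::real)"
    and hd: "\<And>m m' t. m \<noteq> m' \<Longrightarrow> h m t = 0 \<or> h m' t = 0"
    and g0: "norm g0 \<le> 1" and y: "norm y \<le> 1"
  defines "G m \<equiv> Bcontfun (\<lambda>t. (1 - h m t) *\<^sub>R apply_bcontfun g0 t + h m t *\<^sub>R y)"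
  shows "\<And>m t. apply_bcontfun (G m) t = (1 - h m t) *\<^sub>R apply_bcontfun g0 t + h m t *\<^sub>R y"
    and "\<And>m. norm (G m) \<le> 1"
    and "\<And>\<phi> :: ('k \<Rightarrow>\<^sub>C 'x) \<Rightarrow>\<^sub>L real. (\<lambda>m. blinfun_apply \<phi> (G m)) \<longlonglongrightarrow> blinfun_apply \<phi> g0"
proof -
  have pt: "norm ((1 - h m t) *\<^sub>R apply_bcontfun g0 t + h m t *\<^sub>R y) \<le> 1" for m t
  proof -
    have "norm ((1 - h m t) *\<^sub>R apply_bcontfun g0 t + h m t *\<^sub>R y)
        \<le> (1 - h m t) * norm (apply_bcontfun g0 t) + h m t * norm y"
      using h01[of m t] by (auto intro!: order.trans[OF norm_triangle_ineq] simp: abs_of_nonneg)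
    also have "\<dots> \<le> (1 - h m t) * 1 + h m t * 1"
      using h01[of m t] order.trans[OF norm_bounded g0] y
      by (intro add_mono mult_left_mono) auto
    finally show ?thesis by simp
  qed
  have mem: "(\<lambda>t. (1 - h m t) *\<^sub>R apply_bcontfun g0 t + h m t *\<^sub>R y) \<in> bcontfun" for m
    by (rule bcontfun_normI[OF _ pt]) (auto intro!: continuous_intros hc)
  show ap: "apply_bcontfun (G m) t = (1 - h m t) *\<^sub>R apply_bcontfun g0 t + h m t *\<^sub>R y" for m t
    unfolding G_def using Bcontfun_inverse[OF mem[of m]] by simp
  show "norm (G m) \<le> 1" for m by (rule norm_bound) (simp add: ap pt)
  fix \<phi> :: "('k \<Rightarrow>\<^sub>C 'x) \<Rightarrow>\<^sub>L real"
  define p where "p m = G m - g0" for m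
  have papp: "apply_bcontfun (p m) t = h m t *\<^sub>R (y - apply_bcontfun g0 t)" for m t
    by (simp add: p_def ap algebra_simps)
  have "norm (p m) \<le> 2" for m
  proof (rule norm_bound)
    fix t
    have "norm (apply_bcontfun (p m) t) = h m t * norm (y - apply_bcontfun g0 t)"
      using h01[of m t] by (simp add: papp)
    also have "\<dots> \<le> 1 * 2"
      using h01[of m t] norm_triangle_ineq4[of y "apply_bcontfun g0 t"] order.trans[OF norm_bounded g0, of t] y
      by (intro mult_mono) auto
    finally show "norm (apply_bcontfun (p m) t) \<le> 2" by simp
  qed
  moreover have "apply_bcontfun (p m) t = 0 \<or> apply_bcontfun (p m') t = 0" if "m \<noteq> m'" for m m' t
    using hd[OF that, of t] by (auto simp: papp)
  ultimately have "(\<lambda>m. blinfun_apply \<phi> (p m)) \<longlonglongrightarrow> 0" by (rule disjoint_weak_null)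
  then have "(\<lambda>m. blinfun_apply \<phi> (G m) - blinfun_apply \<phi> g0) \<longlonglongrightarrow> 0"
    by (simp add: p_def blinfun.diff_right)
  then show "(\<lambda>m. blinfun_apply \<phi> (G m)) \<longlonglongrightarrow> blinfun_apply \<phi> g0"
    by (simp add: LIM_zero_iff)
qed

lemma far_point:
  fixes f :: "'k::t2_space \<Rightarrow>\<^sub>C 'x::real_normed_vector"
  assumes "compact (UNIV::'k set)" "t0 islimpt (UNIV::'k set)" "norm (apply_bcontfun f t0) = 1" "\<epsilon> > 0"
  obtains s :: "nat \<Rightarrow> 'k" and h :: "nat \<Rightarrow> 'k \<Rightarrow> real"
  where "\<And>m. continuous_on UNIV (h m)" "\<And>m t. 0 \<le> h m t \<and> h m t \<le> 1"
    "\<And>m. h m (s m) = 1" "\<And>m m' t. m \<noteq> m' \<Longrightarrow> h m t = 0 \<or> h m' t = 0"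
    "\<And>m w. apply_bcontfun w (s m) = - apply_bcontfun f t0 \<Longrightarrow> norm (f - w) > 2 - \<epsilon>"
proof -
  define V where "V = {t. norm (apply_bcontfun f t - apply_bcontfun f t0) < \<epsilon>}"
  have oV: "open V" unfolding V_def by (rule open_Collect_less) (intro continuous_intros continuous_on_apply_bcontfun continuous_on_const)+
  have tV: "t0 \<in> V" using assms(4) by (simp add: V_def)
  obtain s :: "nat \<Rightarrow> 'k" and h :: "nat \<Rightarrow> 'k \<Rightarrow> real" where sh: "\<And>m. s m \<in> V" "\<And>m. continuous_on UNIV (h m)" "\<And>m t. 0 \<le> h m t \<and> h m t \<le> (1::real)"
    "\<And>m. h m (s m) = 1" "\<And>m m' t. m \<noteq> m' \<Longrightarrow> h m t = 0 \<or> h m' t = 0"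
    using disjoint_bumps[OF assms(1,2) oV tV] by metis
  show ?thesis
  proof (rule that[OF sh(2-5)])
    fix m w assume w: "apply_bcontfun w (s m) = - apply_bcontfun f t0"
    have "apply_bcontfun f t0 + apply_bcontfun f t0 = 2 *\<^sub>R apply_bcontfun f t0" by (simp add: scaleR_2)
    then have "2 = norm (apply_bcontfun f t0 + apply_bcontfun f t0)" using assms(3) by simp
    also have "\<dots> \<le> norm (apply_bcontfun f (s m) + apply_bcontfun f t0) + norm (apply_bcontfun f (s m) - apply_bcontfun f t0)"
      using norm_triangle_ineq4[of "apply_bcontfun f (s m) + apply_bcontfun f t0" "apply_bcontfun f (s m) - apply_bcontfun f t0"]
      by simp
    also have "\<dots> < norm (apply_bcontfun f (s m) + apply_bcontfun f t0) + \<epsilon>"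
      using sh(1)[of m] by (simp add: V_def)
    also have "norm (apply_bcontfun f (s m) + apply_bcontfun f t0) = norm (apply_bcontfun (f - w) (s m))"
      using w by simp
    also have "\<dots> \<le> norm (f - w)" by (rule norm_bounded)
    finally show "norm (f - w) > 2 - \<epsilon>" by simp
  qed
qed

lemma sup_eq_2:
  fixes f :: "'z::real_normed_vector"
  assumes "A \<subseteq> cball 0 1" "A \<noteq> {}" "norm f = 1" "\<And>\<epsilon>. \<epsilon> > 0 \<Longrightarrow> \<exists>w\<in>A. norm (f - w) > 2 - \<epsilon>"
  shows "(SUP w\<in>A. norm (f - w)) = 2"
proof -
  have le2: "norm (f - w) \<le> 2" if "w \<in> A" for w
  proof -
    have "norm w \<le> 1" using assms(1) that by auto
    then show ?thesis using norm_triangle_ineq4[of f w] assms(3) by simp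
  qed
  have bdd: "bdd_above ((\<lambda>w. norm (f - w)) ` A)" using le2 by (auto intro!: bdd_aboveI)
  have "(SUP w\<in>A. norm (f - w)) \<le> 2" using le2 assms(2) by (auto intro!: cSUP_least)
  moreover have "\<not> (SUP w\<in>A. norm (f - w)) < 2"
  proof
    assume lt: "(SUP w\<in>A. norm (f - w)) < 2"
    then obtain w where "w \<in> A" "norm (f - w) > 2 - (2 - (SUP w\<in>A. norm (f - w)))"
      using assms(4)[of "2 - (SUP w\<in>A. norm (f - w))"] by auto
    moreover have "norm (f - w) \<le> (SUP w\<in>A. norm (f - w))" using cSUP_upper[OF \<open>w \<in> A\<close> bdd] .
    ultimately show False by simp
  qed
  ultimately show ?thesis by simp
qed

lemma slice_sub: "slice S \<Longrightarrow> S \<subseteq> cball 0 1"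
  unfolding slice_def by auto

lemma ccs_daug:
  fixes f :: "'k::t2_space \<Rightarrow>\<^sub>C 'x::real_normed_vector"
  assumes K: "compact (UNIV::'k set)" and t0: "t0 islimpt (UNIV::'k set)"
    and nf: "norm f = 1" and nft: "norm (apply_bcontfun f t0) = 1"
  shows "ccs_daugavet_point f"
  unfolding ccs_daugavet_point_def
proof (intro conjI allI impI)
  show "norm f = 1" by (rule nf)
  fix A :: "('k \<Rightarrow>\<^sub>C 'x) set"
  assume "ccs A"
  then obtain n :: nat and lam :: "nat \<Rightarrow> real" and S :: "nat \<Rightarrow> ('k \<Rightarrow>\<^sub>C 'x) set" where n: "n \<ge> 1" and lS: "\<forall>i<n. 0 < lam i \<and> lam i \<le> 1 \<and> slice (S i)"
    and ls1: "(\<Sum>i<n. lam i) = 1"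
    and A: "A = {(\<Sum>i<n. lam i *\<^sub>R x i) | x. \<forall>i<n. x i \<in> S i}"
    unfolding ccs_def by blast
  have ex: "\<exists>p :: ('k \<Rightarrow>\<^sub>C 'x) \<times> (('k \<Rightarrow>\<^sub>C 'x) \<Rightarrow>\<^sub>L real) \<times> real. i < n \<longrightarrow> fst p \<in> S i \<and> snd (snd p) > 0 \<and> S i = {w \<in> cball 0 1. blinfun_apply (fst (snd p)) w > norm (fst (snd p)) - snd (snd p)}" for i
  proof (cases "i < n")
    case True
    then have sl: "slice (S i)" using lS by blast
    then obtain zs :: "('k \<Rightarrow>\<^sub>C 'x) \<Rightarrow>\<^sub>L real" and d :: real where zd: "d > 0" "S i = {w \<in> cball 0 1. blinfun_apply zs w > norm zs - d}"
      unfolding slice_def by blast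
    from sl obtain x0 where "x0 \<in> S i" unfolding slice_def by blast
    with zd show ?thesis by (intro exI[of _ "(x0, zs, d)"]) simp
  qed simp
  from choice[OF allI[OF ex]] obtain P :: "nat \<Rightarrow> ('k \<Rightarrow>\<^sub>C 'x) \<times> (('k \<Rightarrow>\<^sub>C 'x) \<Rightarrow>\<^sub>L real) \<times> real"
    where P: "\<forall>i. i < n \<longrightarrow> fst (P i) \<in> S i \<and> snd (snd (P i)) > 0 \<and> S i = {w \<in> cball 0 1. blinfun_apply (fst (snd (P i))) w > norm (fst (snd (P i))) - snd (snd (P i))}"
    by (rule exE)
  define x where "x i = fst (P i)" for i
  define Z where "Z i = fst (snd (P i))" for i
  define D where "D i = snd (snd (P i))" for i
  have xZD: "x i \<in> S i \<and> D i > 0 \<and> S i = {w \<in> cball 0 1. blinfun_apply (Z i) w > norm (Z i) - D i}" if "i < n" for i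
    using P that unfolding x_def Z_def D_def by blast
  have Acb: "A \<subseteq> cball 0 1"
  proof
    fix w assume "w \<in> A"
    then obtain y where w: "w = (\<Sum>i<n. lam i *\<^sub>R y i)" and y: "\<forall>i<n. y i \<in> S i" unfolding A by blast
    have "norm w \<le> (\<Sum>i<n. norm (lam i *\<^sub>R y i))" unfolding w by (rule norm_sum)
    also have "\<dots> \<le> (\<Sum>i<n. lam i)"
    proof (rule sum_mono)
      fix i assume "i \<in> {..<n}"
      then have "norm (y i) \<le> 1" "0 < lam i" using y lS slice_sub[of "S i"] by auto
      then show "norm (lam i *\<^sub>R y i) \<le> lam i" using mult_left_mono[of "norm (y i)" 1 "lam i"] by simp
    qed
    finally show "w \<in> cball 0 1" using ls1 by simp
  qed
  have "(\<Sum>i<n. lam i *\<^sub>R x i) \<in> A" unfolding A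
    by (rule CollectI, rule exI[of _ x]) (use xZD in auto)
  then have Ane: "A \<noteq> {}" by blast
  show "(SUP w\<in>A. norm (f - w)) = 2"
  proof (rule sup_eq_2[OF Acb Ane nf])
    fix \<epsilon> :: real assume "\<epsilon> > 0"
    obtain s :: "nat \<Rightarrow> 'k" and h :: "nat \<Rightarrow> 'k \<Rightarrow> real" where
      sh: "\<And>m. continuous_on UNIV (h m)" "\<And>m t. 0 \<le> h m t \<and> h m t \<le> 1"
      "\<And>m. h m (s m) = 1" "\<And>m m' t. m \<noteq> m' \<Longrightarrow> h m t = 0 \<or> h m' t = 0"
      "\<And>m w. apply_bcontfun w (s m) = - apply_bcontfun f t0 \<Longrightarrow> norm (f - w) > 2 - \<epsilon>"
      using far_point[OF K t0 nft \<open>\<epsilon> > 0\<close>] by metis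
    define y where "y = - apply_bcontfun f t0"
    have ny: "norm y \<le> 1" using nft by (simp add: y_def)
    define G where "G i m = Bcontfun (\<lambda>t. (1 - h m t) *\<^sub>R apply_bcontfun (x i) t + h m t *\<^sub>R y)" for i m
    have nx: "norm (x i) \<le> 1" if "i < n" for i using xZD[OF that] by auto
    have Gap: "apply_bcontfun (G i m) t = (1 - h m t) *\<^sub>R apply_bcontfun (x i) t + h m t *\<^sub>R y" if "i < n" for i m t
      unfolding G_def by (rule approx_seq(1)[OF sh(1,2,4) nx[OF that] ny])
    have Gn: "norm (G i m) \<le> 1" if "i < n" for i m
      unfolding G_def by (rule approx_seq(2)[OF sh(1,2,4) nx[OF that] ny])
    have Gl: "(\<lambda>m. blinfun_apply \<phi> (G i m)) \<longlonglongrightarrow> blinfun_apply \<phi> (x i)" if "i < n" for i and \<phi> :: "('k \<Rightarrow>\<^sub>C 'x) \<Rightarrow>\<^sub>L real"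
      unfolding G_def by (rule approx_seq(3)[OF sh(1,2,4) nx[OF that] ny])
    have "\<forall>i\<in>{..<n}. eventually (\<lambda>m. blinfun_apply (Z i) (G i m) > norm (Z i) - D i) sequentially"
    proof
      fix i assume "i \<in> {..<n}"
      then have i: "i < n" by simp
      have "blinfun_apply (Z i) (x i) > norm (Z i) - D i" using xZD[OF i] by auto
      then show "eventually (\<lambda>m. blinfun_apply (Z i) (G i m) > norm (Z i) - D i) sequentially"
        using order_tendstoD(1)[OF Gl[OF i]] by blast
    qed
    then have "eventually (\<lambda>m. \<forall>i\<in>{..<n}. blinfun_apply (Z i) (G i m) > norm (Z i) - D i) sequentially"
      by (rule eventually_ball_finite[rotated]) simp
    then obtain m where m: "\<And>i. i < n \<Longrightarrow> blinfun_apply (Z i) (G i m) > norm (Z i) - D i"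
      unfolding eventually_sequentially by auto
    define w where "w = (\<Sum>i<n. lam i *\<^sub>R G i m)"
    have "\<forall>i<n. G i m \<in> S i" using m Gn xZD by auto
    then have wA: "w \<in> A" unfolding A w_def
      by (intro CollectI exI[of _ "\<lambda>i. G i m"]) simp
    have "apply_bcontfun w (s m) = (\<Sum>i<n. lam i *\<^sub>R apply_bcontfun (G i m) (s m))"
      unfolding w_def by (simp add: apply_bcontfun_sum)
    also have "\<dots> = (\<Sum>i<n. lam i *\<^sub>R y)"
      by (rule sum.cong) (simp_all add: Gap sh(3))
    also have "\<dots> = y" by (simp add: scaleR_sum_left[symmetric] ls1)
    finally have "apply_bcontfun w (s m) = - apply_bcontfun f t0" by (simp add: y_def)
    then show "\<exists>w\<in>A. norm (f - w) > 2 - \<epsilon>" using wA sh(5) by blast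
  qed
qed

lemma super_daug:
  fixes f :: "'k::t2_space \<Rightarrow>\<^sub>C 'x::real_normed_vector"
  assumes K: "compact (UNIV::'k set)" and t0: "t0 islimpt (UNIV::'k set)"
    and nf: "norm f = 1" and nft: "norm (apply_bcontfun f t0) = 1"
  shows "super_daugavet_point f"
  unfolding super_daugavet_point_def
proof (intro conjI allI impI)
  show "norm f = 1" by (rule nf)
  fix A :: "('k \<Rightarrow>\<^sub>C 'x) set"
  assume "rel_weakly_open_ball A \<and> A \<noteq> {}"
  then obtain U where wo: "weakly_open U" and A: "A = U \<inter> cball 0 1" and Ane: "A \<noteq> {}"
    unfolding rel_weakly_open_ball_def by blast
  from Ane obtain g0 where g0: "g0 \<in> A" by blast
  then have g0U: "g0 \<in> U" and ng0: "norm g0 \<le> 1" using A by auto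
  from wo g0U obtain F :: "(('k \<Rightarrow>\<^sub>C 'x) \<Rightarrow>\<^sub>L real) set" and e0 :: real where
    F: "finite F" "e0 > 0" "{y. \<forall>zs\<in>F. \<bar>blinfun_apply zs y - blinfun_apply zs g0\<bar> < e0} \<subseteq> U"
    unfolding weakly_open_def by blast
  have Acb: "A \<subseteq> cball 0 1" using A by blast
  show "(SUP w\<in>A. norm (f - w)) = 2"
  proof (rule sup_eq_2[OF Acb Ane nf])
    fix \<epsilon> :: real assume "\<epsilon> > 0"
    obtain s :: "nat \<Rightarrow> 'k" and h :: "nat \<Rightarrow> 'k \<Rightarrow> real" where
      sh: "\<And>m. continuous_on UNIV (h m)" "\<And>m t. 0 \<le> h m t \<and> h m t \<le> 1"
      "\<And>m. h m (s m) = 1" "\<And>m m' t. m \<noteq> m' \<Longrightarrow> h m t = 0 \<or> h m' t = 0"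
      "\<And>m w. apply_bcontfun w (s m) = - apply_bcontfun f t0 \<Longrightarrow> norm (f - w) > 2 - \<epsilon>"
      using far_point[OF K t0 nft \<open>\<epsilon> > 0\<close>] by metis
    define y where "y = - apply_bcontfun f t0"
    have ny: "norm y \<le> 1" using nft by (simp add: y_def)
    define G where "G m = Bcontfun (\<lambda>t. (1 - h m t) *\<^sub>R apply_bcontfun g0 t + h m t *\<^sub>R y)" for m
    have Gap: "apply_bcontfun (G m) t = (1 - h m t) *\<^sub>R apply_bcontfun g0 t + h m t *\<^sub>R y" for m t
      unfolding G_def by (rule approx_seq(1)[OF sh(1,2,4) ng0 ny])
    have Gn: "norm (G m) \<le> 1" for m
      unfolding G_def by (rule approx_seq(2)[OF sh(1,2,4) ng0 ny])
    have Gl: "(\<lambda>m. blinfun_apply \<phi> (G m)) \<longlonglongrightarrow> blinfun_apply \<phi> g0" for \<phi> :: "('k \<Rightarrow>\<^sub>C 'x) \<Rightarrow>\<^sub>L real"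
      unfolding G_def by (rule approx_seq(3)[OF sh(1,2,4) ng0 ny])
    have "\<forall>zs\<in>F. eventually (\<lambda>m. \<bar>blinfun_apply zs (G m) - blinfun_apply zs g0\<bar> < e0) sequentially"
    proof
      fix zs assume "zs \<in> F"
      have "(\<lambda>m. blinfun_apply zs (G m) - blinfun_apply zs g0) \<longlonglongrightarrow> 0"
        using Gl[of zs] by (simp add: LIM_zero_iff)
      then have "(\<lambda>m. \<bar>blinfun_apply zs (G m) - blinfun_apply zs g0\<bar>) \<longlonglongrightarrow> 0"
        by (simp add: tendsto_rabs_zero_iff)
      then show "eventually (\<lambda>m. \<bar>blinfun_apply zs (G m) - blinfun_apply zs g0\<bar> < e0) sequentially"
        using order_tendstoD(2)[of _ 0 sequentially e0] F(2) by blast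
    qed
    then have "eventually (\<lambda>m. \<forall>zs\<in>F. \<bar>blinfun_apply zs (G m) - blinfun_apply zs g0\<bar> < e0) sequentially"
      by (rule eventually_ball_finite[OF F(1)])
    then obtain m where m: "\<forall>zs\<in>F. \<bar>blinfun_apply zs (G m) - blinfun_apply zs g0\<bar> < e0"
      unfolding eventually_sequentially by auto
    have wA: "G m \<in> A" unfolding A using m F(3) Gn by auto
    have "apply_bcontfun (G m) (s m) = - apply_bcontfun f t0" by (simp add: Gap sh(3) y_def)
    then show "\<exists>w\<in>A. norm (f - w) > 2 - \<epsilon>" using wA sh(5) by blast
  qed
qed

lemma slice_rwo: "slice S \<Longrightarrow> rel_weakly_open_ball S"
proof -
  assume "slice S"
  then obtain zs :: "'a \<Rightarrow>\<^sub>L real" and d where d: "d > 0" and S: "S = {w \<in> cball 0 1. blinfun_apply zs w > norm zs - d}"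
    unfolding slice_def by blast
  define U where "U = {w. blinfun_apply zs w > norm zs - d}"
  have "weakly_open U" unfolding weakly_open_def
  proof
    fix x assume "x \<in> U"
    then have e: "blinfun_apply zs x - (norm zs - d) > 0" by (simp add: U_def)
    show "\<exists>(F::('a \<Rightarrow>\<^sub>L real) set) (e::real). finite F \<and> e > 0 \<and> {y. \<forall>zs\<in>F. \<bar>blinfun_apply zs y - blinfun_apply zs x\<bar> < e} \<subseteq> U"
    proof -
      have sub: "{y. \<forall>z\<in>{zs}. \<bar>blinfun_apply z y - blinfun_apply z x\<bar> < blinfun_apply zs x - (norm zs - d)} \<subseteq> U"
        by (auto simp: U_def)
      have fin: "finite {zs}" by simp
      show ?thesis
        apply (rule exI[where x="{zs}"])
        apply (rule exI[where x="blinfun_apply zs x - (norm zs - d)"])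
        using sub fin e by simp
    qed
  qed
  moreover have "S = U \<inter> cball 0 1" unfolding S U_def by auto
  ultimately show ?thesis unfolding rel_weakly_open_ball_def by blast
qed

lemma slice_ccs: "slice S \<Longrightarrow> ccs S"
  unfolding ccs_def
proof (rule exI[where x="1::nat"], rule exI[where x="\<lambda>_::nat. 1::real"], rule exI[of _ "\<lambda>_. S"], intro conjI)
  assume "slice S"
  then show "\<forall>i<1. 0 < (1::real) \<and> (1::real) \<le> 1 \<and> slice S" by simp
  show "S = {\<Sum>i<(1::nat). (1::real) *\<^sub>R x i |x. \<forall>i<(1::nat). x i \<in> S}"
  proof
    show "S \<subseteq> {\<Sum>i<(1::nat). (1::real) *\<^sub>R x i |x. \<forall>i<(1::nat). x i \<in> S}"
    proof
      fix w assume "w \<in> S"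
      then show "w \<in> {\<Sum>i<(1::nat). (1::real) *\<^sub>R x i |x. \<forall>i<(1::nat). x i \<in> S}"
        by (intro CollectI exI[of _ "\<lambda>_. w"]) (simp add: lessThan_Suc)
    qed
    show "{\<Sum>i<(1::nat). (1::real) *\<^sub>R x i |x. \<forall>i<(1::nat). x i \<in> S} \<subseteq> S" by auto
  qed
qed simp_all

lemma bl_eval: "bounded_linear (\<lambda>w::('a::topological_space \<Rightarrow>\<^sub>C 'b::real_normed_vector). apply_bcontfun w t)"
  by (rule bounded_linear_intro[where K=1]) (auto simp: norm_bounded)

lemma max_off:
  fixes g :: "'k::topological_space \<Rightarrow>\<^sub>C 'x::real_normed_vector"
  assumes K: "compact (UNIV::'k set)" and cl: "closed C" and ng: "norm g = 1"
    and nC: "\<And>t. t \<in> C \<Longrightarrow> norm (apply_bcontfun g t) \<noteq> 1"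
  obtains M where "M < 1" "\<And>t. t \<in> C \<Longrightarrow> norm (apply_bcontfun g t) \<le> M"
proof (cases "C = {}")
  case True
  then show ?thesis using that[of 0] by simp
next
  case False
  have cC: "compact C" using compact_Int_closed[OF K cl] by simp
  have "compact ((\<lambda>t. norm (apply_bcontfun g t)) ` C)"
    by (rule compact_continuous_image[OF _ cC]) (intro continuous_intros continuous_on_apply_bcontfun)
  then obtain M where M: "M \<in> (\<lambda>t. norm (apply_bcontfun g t)) ` C" "\<forall>x\<in>(\<lambda>t. norm (apply_bcontfun g t)) ` C. x \<le> M"
    using compact_attains_sup[of "(\<lambda>t. norm (apply_bcontfun g t)) ` C"] False by blast
  from M(1) obtain t1 where t1: "t1 \<in> C" "M = norm (apply_bcontfun g t1)" by blast
  have "M \<le> 1" using t1 norm_bounded[of g t1] ng by simp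
  moreover have "M \<noteq> 1" using t1 nC by simp
  ultimately have "M < 1" by simp
  then show ?thesis using that[of M] M(2) by blast
qed

lemma delta_acc:
  fixes g :: "'k::t2_space \<Rightarrow>\<^sub>C 'x::real_inner"
  assumes K: "compact (UNIV::'k set)" and dp: "delta_point g"
  shows "\<exists>t0. t0 islimpt (UNIV::'k set) \<and> norm (apply_bcontfun g t0) = 1"
proof (rule ccontr)
  assume nacc: "\<not> ?thesis"
  have ng: "norm g = 1" using dp by (simp add: delta_point_def)
  define T where "T = {t. norm (apply_bcontfun g t) = 1}"
  have openT1: "open {t}" if "t \<in> T" for t
  proof -
    have "norm (apply_bcontfun g t) = 1" using that by (simp add: T_def)
    then have nl: "\<not> t islimpt UNIV" using nacc by blast
    have "\<exists>Ov. t \<in> Ov \<and> open Ov \<and> \<not>(\<exists>y\<in>UNIV. y \<in> Ov \<and> y \<noteq> t)"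
      using nl unfolding islimpt_def by simp
    then obtain Ov where Ov: "open Ov" "t \<in> Ov" "\<forall>y\<in>Ov. y = t" by blast
    have "Ov = {t}" using Ov(2,3) by blast
    then show ?thesis using Ov(1) by simp
  qed
  have clT: "closed T" unfolding T_def
    by (rule closed_Collect_eq) (intro continuous_intros continuous_on_apply_bcontfun continuous_on_const)+
  have cT: "compact T" using compact_Int_closed[OF K clT] by simp
  have finT: "finite T"
  proof -
    have "T \<subseteq> (\<Union>c\<in>T. {c})" by blast
    then obtain C where C: "C \<subseteq> T" "finite C" "T \<subseteq> (\<Union>c\<in>C. {c})"
      using compactE_image[OF cT, of T "\<lambda>t. {t}"] openT1 by blast
    then have "T \<subseteq> C" by blast
    then show ?thesis using C(2) finite_subset by blast
  qed
  have oT: "open T"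
  proof -
    have "T = (\<Union>t\<in>T. {t})" by blast
    then show ?thesis using openT1 by (metis open_UN)
  qed
  have Tne: "T \<noteq> {}"
  proof
    assume T0: "T = {}"
    obtain M where M: "M < 1" "\<And>t. t \<in> UNIV \<Longrightarrow> norm (apply_bcontfun g t) \<le> M"
      by (rule max_off[OF K closed_UNIV ng]) (use T0 T_def in auto)
    have "norm g \<le> M" by (rule norm_bound) (use M in auto)
    then show False using ng M by simp
  qed
  obtain M where M: "M < 1" "\<And>t. t \<in> -T \<Longrightarrow> norm (apply_bcontfun g t) \<le> M"
    by (rule max_off[OF K _ ng, of "-T"]) (use oT T_def in auto)
  define m where "m = real (card T)"
  have cT0: "0 < card T" using finT Tne by (simp add: card_gt_0_iff)
  then have m1: "m \<ge> 1" by (simp add: m_def)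
  define L where "L w = (\<Sum>t\<in>T. inner (apply_bcontfun g t) (apply_bcontfun w t)) / m" for w :: "'k \<Rightarrow>\<^sub>C 'x"
  have blL: "bounded_linear L" unfolding L_def
    by (rule bounded_linear_compose[OF bounded_linear_divide bounded_linear_sum])
       (rule bounded_linear_compose[OF bounded_linear_inner_right bl_eval])
  define \<phi> where "\<phi> = Blinfun L"
  have phi: "blinfun_apply \<phi> w = L w" for w unfolding \<phi>_def using bounded_linear_Blinfun_apply[OF blL] by simp
  have gT: "norm (apply_bcontfun g t) = 1" if "t \<in> T" for t using that by (simp add: T_def)
  have Lb: "\<bar>L w\<bar> \<le> norm w" for w
  proof -
    have "\<bar>\<Sum>t\<in>T. inner (apply_bcontfun g t) (apply_bcontfun w t)\<bar> \<le> (\<Sum>t\<in>T. \<bar>inner (apply_bcontfun g t) (apply_bcontfun w t)\<bar>)"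
      by (rule sum_abs)
    also have "\<dots> \<le> (\<Sum>t\<in>T. norm w)"
    proof (rule sum_mono)
      fix t assume "t \<in> T"
      then show "\<bar>inner (apply_bcontfun g t) (apply_bcontfun w t)\<bar> \<le> norm w"
        using Cauchy_Schwarz_ineq2[of "apply_bcontfun g t" "apply_bcontfun w t"] gT norm_bounded[of w t] by simp
    qed
    also have "\<dots> = m * norm w" by (simp add: m_def)
    finally show ?thesis using m1 by (simp add: L_def divide_le_eq mult.commute)
  qed
  have Lg: "L g = 1"
  proof -
    have "(\<Sum>t\<in>T. inner (apply_bcontfun g t) (apply_bcontfun g t)) = (\<Sum>t\<in>T. 1)"
      by (rule sum.cong) (auto simp: gT power2_norm_eq_inner[symmetric])
    then show ?thesis using m1 by (simp add: L_def m_def)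
  qed
  have nphi: "norm \<phi> = 1"
  proof (rule antisym)
    show "norm \<phi> \<le> 1" by (rule norm_blinfun_bound) (use Lb phi in auto)
    have "1 = \<bar>blinfun_apply \<phi> g\<bar>" by (simp add: phi Lg)
    also have "\<dots> \<le> norm \<phi> * norm g" using norm_blinfun[of \<phi> g] by simp
    finally show "1 \<le> norm \<phi>" using ng by simp
  qed
  define \<delta> where "\<delta> = 1 / (2 * m)"
  have d0: "\<delta> > 0" using m1 by (simp add: \<delta>_def)
  define S where "S = {w \<in> cball 0 1. blinfun_apply \<phi> w > norm \<phi> - \<delta>}"
  have gS: "g \<in> S" using ng d0 by (simp add: S_def phi Lg nphi)
  have "slice S" unfolding slice_def using gS d0 S_def by blast
  then have sup2: "(SUP w\<in>S. norm (g - w)) = 2" using dp gS by (simp add: delta_point_def)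
  define c where "c = max 1 (M + 1)"
  have c2: "c < 2" using M(1) by (simp add: c_def)
  have bnd: "norm (g - w) \<le> c" if "w \<in> S" for w
  proof (rule norm_bound)
    fix t
    have nw: "norm w \<le> 1" using that by (simp add: S_def)
    have nwt: "norm (apply_bcontfun w t) \<le> 1" using norm_bounded[of w t] nw by simp
    show "norm (apply_bcontfun (g - w) t) \<le> c"
    proof (cases "t \<in> T")
      case False
      then have "norm (apply_bcontfun g t) \<le> M" using M(2) by simp
      then have "norm (apply_bcontfun g t - apply_bcontfun w t) \<le> M + 1"
        using norm_triangle_ineq4[of "apply_bcontfun g t" "apply_bcontfun w t"] nwt by simp
      then show ?thesis by (simp add: c_def)
    next
      case True
      have Lw: "L w > 1 - \<delta>" using that by (simp add: S_def phi nphi)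
      have "(\<Sum>t\<in>T. inner (apply_bcontfun g t) (apply_bcontfun w t)) = m * L w"
        using m1 by (simp add: L_def)
      also have "\<dots> > m * (1 - \<delta>)" using Lw m1 by simp
      also have "m * (1 - \<delta>) = m - 1/2" using m1 by (simp add: \<delta>_def field_simps)
      finally have sumgt: "(\<Sum>t\<in>T. inner (apply_bcontfun g t) (apply_bcontfun w t)) > m - 1/2" .
      have "(\<Sum>t\<in>T. inner (apply_bcontfun g t) (apply_bcontfun w t))
          = inner (apply_bcontfun g t) (apply_bcontfun w t) + (\<Sum>t\<in>T-{t}. inner (apply_bcontfun g t) (apply_bcontfun w t))"
        by (rule sum.remove[OF finT True])
      also have "(\<Sum>t\<in>T-{t}. inner (apply_bcontfun g t) (apply_bcontfun w t)) \<le> (\<Sum>t\<in>T-{t}. 1)"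
      proof (rule sum_mono)
        fix s assume "s \<in> T - {t}"
        then have "\<bar>inner (apply_bcontfun g s) (apply_bcontfun w s)\<bar> \<le> 1"
          using Cauchy_Schwarz_ineq2[of "apply_bcontfun g s" "apply_bcontfun w s"] gT norm_bounded[of w s] nw by simp
        then show "inner (apply_bcontfun g s) (apply_bcontfun w s) \<le> 1" by simp
      qed
      also have "(\<Sum>t\<in>T-{t}. (1::real)) = m - 1" using finT True cT0 by (simp add: m_def of_nat_diff)
      finally have inn: "inner (apply_bcontfun g t) (apply_bcontfun w t) > 1/2" using sumgt by simp
      have "(norm (apply_bcontfun g t - apply_bcontfun w t))\<^sup>2
          = (norm (apply_bcontfun g t))\<^sup>2 - 2 * inner (apply_bcontfun g t) (apply_bcontfun w t) + (norm (apply_bcontfun w t))\<^sup>2"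
        by (simp add: power2_norm_eq_inner inner_diff inner_commute)
      also have "\<dots> \<le> 1"
      proof -
        have "(norm (apply_bcontfun w t))\<^sup>2 \<le> 1" using nwt by (simp add: power_le_one)
        then show ?thesis using inn gT[OF True] by simp
      qed
      finally have sq: "(norm (apply_bcontfun g t - apply_bcontfun w t))\<^sup>2 \<le> 1\<^sup>2" by simp
      have "norm (apply_bcontfun g t - apply_bcontfun w t) \<le> 1"
        by (rule power2_le_imp_le[OF sq]) simp
      then show ?thesis by (simp add: c_def)
    qed
  qed
  have Sne: "S \<noteq> {}" using gS by blast
  have "(SUP w\<in>S. norm (g - w)) \<le> c" by (rule cSUP_least[OF Sne bnd])
  then show False using sup2 c2 by simp
qed

lemma six_agree:
  fixes g :: "'k::t2_space \<Rightarrow>\<^sub>C 'x::real_inner"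
  assumes K: "compact (UNIV::'k set)"
  shows "six_notions_agree g"
proof -
  have d1: "delta_point g" if H: "daugavet_point g"
    unfolding delta_point_def
  proof (intro conjI allI impI)
    show "norm g = 1" using H by (simp add: daugavet_point_def)
    fix A :: "('k \<Rightarrow>\<^sub>C 'x) set" assume a: "slice A \<and> g \<in> A"
    show "(SUP w\<in>A. norm (g - w)) = 2"
      using spec[OF conjunct2[OF H[unfolded daugavet_point_def]], of A] a by simp
  qed
  have d2: "delta_point g" if H: "super_delta_point g"
    unfolding delta_point_def
  proof (intro conjI allI impI)
    show "norm g = 1" using H by (simp add: super_delta_point_def)
    fix A :: "('k \<Rightarrow>\<^sub>C 'x) set" assume a: "slice A \<and> g \<in> A"
    then have "rel_weakly_open_ball A" by (simp add: slice_rwo)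
    then show "(SUP w\<in>A. norm (g - w)) = 2"
      using spec[OF conjunct2[OF H[unfolded super_delta_point_def]], of A] a by simp
  qed
  have d3: "daugavet_point g" if H: "super_daugavet_point g"
    unfolding daugavet_point_def
  proof (intro conjI allI impI)
    show "norm g = 1" using H by (simp add: super_daugavet_point_def)
    fix A :: "('k \<Rightarrow>\<^sub>C 'x) set" assume a: "slice A"
    then have "rel_weakly_open_ball A" "A \<noteq> {}" by (simp_all add: slice_rwo slice_def)
    then show "(SUP w\<in>A. norm (g - w)) = 2"
      using spec[OF conjunct2[OF H[unfolded super_daugavet_point_def]], of A] by simp
  qed
  have d4: "delta_point g" if H: "ccs_delta_point g"
    unfolding delta_point_def
  proof (intro conjI allI impI)
    show "norm g = 1" using H by (simp add: ccs_delta_point_def)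
    fix A :: "('k \<Rightarrow>\<^sub>C 'x) set" assume a: "slice A \<and> g \<in> A"
    then have "ccs A" by (simp add: slice_ccs)
    then show "(SUP w\<in>A. norm (g - w)) = 2"
      using spec[OF conjunct2[OF H[unfolded ccs_delta_point_def]], of A] a by simp
  qed
  have d5: "daugavet_point g" if H: "ccs_daugavet_point g"
    unfolding daugavet_point_def
  proof (intro conjI allI impI)
    show "norm g = 1" using H by (simp add: ccs_daugavet_point_def)
    fix A :: "('k \<Rightarrow>\<^sub>C 'x) set" assume a: "slice A"
    then have "ccs A" by (simp add: slice_ccs)
    then show "(SUP w\<in>A. norm (g - w)) = 2"
      using spec[OF conjunct2[OF H[unfolded ccs_daugavet_point_def]], of A] by simp
  qed
  have e1: "ccs_delta_point g" if H: "ccs_daugavet_point g"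
    using H unfolding ccs_daugavet_point_def ccs_delta_point_def by simp
  have e2: "super_delta_point g" if H: "super_daugavet_point g"
    unfolding super_delta_point_def
  proof (intro conjI allI impI)
    show "norm g = 1" using H by (simp add: super_daugavet_point_def)
    fix A :: "('k \<Rightarrow>\<^sub>C 'x) set" assume a: "rel_weakly_open_ball A \<and> g \<in> A"
    then have "rel_weakly_open_ball A \<and> A \<noteq> {}" by blast
    then show "(SUP w\<in>A. norm (g - w)) = 2"
      using spec[OF conjunct2[OF H[unfolded super_daugavet_point_def]], of A] by simp
  qed
  have main: "ccs_daugavet_point g \<and> super_daugavet_point g" if dp: "delta_point g"
  proof -
    obtain t0 where t0: "t0 islimpt (UNIV::'k set)" "norm (apply_bcontfun g t0) = 1"
      using delta_acc[OF K dp] by blast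
    have ng: "norm g = 1" using dp by (simp add: delta_point_def)
    show ?thesis using ccs_daug[OF K t0(1) ng t0(2)] super_daug[OF K t0(1) ng t0(2)] by blast
  qed
  show ?thesis unfolding six_notions_agree_def
    apply (intro conjI iffI)
    apply (erule d1)
    apply (erule d5[OF conjunct1[OF main]])
    apply (erule d2)
    apply (erule e2[OF conjunct2[OF main]])
    apply (erule d1[OF d3])
    apply (erule conjunct2[OF main])
    apply (erule d4)
    apply (erule e1[OF conjunct1[OF main]])
    apply (erule d1[OF d5])
    apply (erule conjunct1[OF main])
    done
qed

theorem mainTheorem10:
  fixes dummy :: "'k::t2_space"
  assumes "compact (UNIV :: 'k set)"
  shows "(\<forall>(f :: 'k \<Rightarrow>\<^sub>C 'x::banach) (t0::'k).
            t0 islimpt (UNIV :: 'k set) \<and> norm f = 1 \<and> norm (apply_bcontfun f t0) = 1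
            \<longrightarrow> ccs_daugavet_point f)
       \<and> (\<forall>g :: 'k \<Rightarrow>\<^sub>C real. six_notions_agree g)
       \<and> (\<forall>h :: 'k \<Rightarrow>\<^sub>C complex. six_notions_agree h)"
proof (intro conjI allI impI)
  fix f :: "'k \<Rightarrow>\<^sub>C 'x::banach" and t0 :: 'k
  assume H: "t0 islimpt (UNIV :: 'k set) \<and> norm f = 1 \<and> norm (apply_bcontfun f t0) = 1"
  show "ccs_daugavet_point f"
    using ccs_daug[OF assms conjunct1[OF H] conjunct1[OF conjunct2[OF H]] conjunct2[OF conjunct2[OF H]]] .
next
  fix g :: "'k \<Rightarrow>\<^sub>C real"
  show "six_notions_agree g" by (rule six_agree[OF assms])
next
  fix h :: "'k \<Rightarrow>\<^sub>C complex"
  show "six_notions_agree h" by (rule six_agree[OF assms])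
qed
end
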